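(* Let $k$ be a field of characteristic $0$, let $n_0<n_1$ be positive integers with $\gcd(n_0,n_1)=1$, and let $S=\langle (0,n_1),(n_0,n_1-n_0),(n_1,0)\rangle\subseteq\mathbb{N}^2$. Let $S_1=\langle n_0,n_1\rangle$ and $S_2=\langle n_1-n_0,n_1\rangle$ be the projections of $S$ onto the first and second coordinates. Then: \begin{enumerate} \item If $S_1\neq\mathbb{N}$ and $S_2\neq\mathbb{N}$, then $\mathrm{Der}_k(k[S])$ is minimally generated by $\left\{ t\frac{\partial}{\partial t},\ t^{n_0(n_1-1)-n_1+1}u^{(n_1-1)(n_1-n_0)}\frac{\partial}{\partial t},\ u\frac{\partial}{\partial u},\ t^{n_0(n_1-1)}u^{(n_1-1)(n_1-n_0)-n_1+1}\frac{\partial}{\partial u}\right\}$. \item If $S_1=\mathbb{N}$ and $S_2\neq\mathbb{N}$, then $\mathrm{Der}_k(k[S])$ is minimally generated by $\left\{ t\frac{\partial}{\partial t},\ u^{1+(n_1-2)n_1}\frac{\partial}{\partial t},\ u\frac{\partial}{\partial u},\ t^{n_1-1}u^{(n_1-1)(n_1-2)}\frac{\partial}{\partial u}\right\}$. \item If $S_1\neq\mathbb{N}$ and $S_2=\mathbb{N}$, then $\mathrm{Der}_k(k[S])$ is minimally generated by $\left\{ t\frac{\partial}{\partial t},\ t^{n_0(n_1-1)-n_1+1}u^{n_1-1}\frac{\partial}{\partial t},\ u\frac{\partial}{\partial u},\ t^{n_0(n_1-1)}\frac{\partial}{\partial u}\right\}$. \item If $S_1=S_2=\mathbb{N}$, then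 $\mathrm{Der}_k(k[S])$ is minimally generated by $\left\{ t\frac{\partial}{\partial t},\ u\frac{\partial}{\partial t},\ u\frac{\partial}{\partial u},\ t\frac{\partial}{\partial u}\right\}$. \end{enumerate}
   Context: For an affine semigroup $S\subseteq\mathbb{N}^2$, the semigroup ring is $k[S]=\bigoplus_{(s_1,s_2)\in S}k\,t^{s_1}u^{s_2}\subseteq k[t,u]$, where $t,u$ are indeterminates (the first coordinate is the exponent of $t$, the second that of $u$). $\mathrm{Der}_k(k[S])$ is the $k[S]$-module of $k$-derivations of $k[S]$; every such derivation extends uniquely to the fraction field $k(t,u)$ and is written as $f\frac{\partial}{\partial t}+g\frac{\partial}{\partial u}$. "Minimally generated" refers to a minimal generating set of $\mathrm{Der}_k(k[S])$ as a $k[S]$-module. $\langle a_0,\dots,a_m\rangle$ denotes the set of $\mathbb{N}$-linear combinations of $a_0,\dots,a_m$. *)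

theory Defs
  imports "HOL-Computational_Algebra.Polynomial"
begin

text \<open>Bivariate polynomials k[t,u] are represented as 'k poly poly = (k[t])[u]:
  the coefficient of t^i u^j in p is coeff (coeff p j) i.\<close>

definition tu_monom :: "nat \<Rightarrow> nat \<Rightarrow> 'k::comm_semiring_1 poly poly" where
  "tu_monom a b = monom (monom 1 a) b"

definition gen2 :: "nat \<Rightarrow> nat \<Rightarrow> nat set" where
  "gen2 a b = {x * a + y * b | x y. True}"

definition semigroupS :: "nat \<Rightarrow> nat \<Rightarrow> (nat \<times> nat) set" where
  "semigroupS n0 n1 =
     {(x * 0 + y * n0 + z * n1, x * n1 + y * (n1 - n0) + z * 0) | x y z. True}"

definition semigroup_ring :: "(nat \<times> nat) set \<Rightarrow> 'k::comm_semiring_1 poly poly set" where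
  "semigroup_ring S = {p. \<forall>i j. coeff (coeff p j) i \<noteq> 0 \<longrightarrow> (i, j) \<in> S}"

text \<open>k-derivations of a k-subalgebra A of k[t,u] (maps A to A; behaviour outside A irrelevant).\<close>
definition is_derivation :: "'k::field poly poly set \<Rightarrow> ('k poly poly \<Rightarrow> 'k poly poly) \<Rightarrow> bool" where
  "is_derivation A D \<longleftrightarrow>
     (\<forall>p\<in>A. D p \<in> A) \<and>
     (\<forall>p\<in>A. \<forall>q\<in>A. D (p + q) = D p + D q) \<and>
     (\<forall>c. \<forall>p\<in>A. D (smult [:c:] p) = smult [:c:] (D p)) \<and>
     (\<forall>p\<in>A. \<forall>q\<in>A. D (p * q) = p * D q + q * D p)"

definition in_span :: "'k::field poly poly set \<Rightarrow> ('k poly poly \<Rightarrow> 'k poly poly) set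
     \<Rightarrow> ('k poly poly \<Rightarrow> 'k poly poly) \<Rightarrow> bool" where
  "in_span A G D \<longleftrightarrow> (\<exists>F c. finite F \<and> F \<subseteq> G \<and> (\<forall>g\<in>F. c g \<in> A) \<and>
       (\<forall>p\<in>A. D p = (\<Sum>g\<in>F. c g * g p)))"

definition generates_Der :: "'k::field poly poly set \<Rightarrow> ('k poly poly \<Rightarrow> 'k poly poly) set \<Rightarrow> bool" where
  "generates_Der A G \<longleftrightarrow> (\<forall>D. is_derivation A D \<longrightarrow> in_span A G D)"

definition minimally_generates_Der :: "'k::field poly poly set \<Rightarrow> ('k poly poly \<Rightarrow> 'k poly poly) set \<Rightarrow> bool" where
  "minimally_generates_Der A G \<longleftrightarrow>
     (\<forall>g\<in>G. is_derivation A g) \<and> generates_Der A G \<and>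
     (\<forall>H. H \<subset> G \<longrightarrow> \<not> generates_Der A H)"

definition dT :: "nat \<Rightarrow> nat \<Rightarrow> 'k::field poly poly \<Rightarrow> 'k poly poly" where
  "dT a b p = tu_monom a b * map_poly pderiv p"

definition dU :: "nat \<Rightarrow> nat \<Rightarrow> 'k::field poly poly \<Rightarrow> 'k poly poly" where
  "dU a b p = tu_monom a b * pderiv p"

end

theory Submission
  imports Defs
begin
definition ec :: "'k::comm_semiring_1 poly poly \<Rightarrow> int \<Rightarrow> int \<Rightarrow> 'k" where
  "ec p i j = (if 0 \<le> i \<and> 0 \<le> j then coeff (coeff p (nat j)) (nat i) else 0)"

lemma ec_add[simp]: "ec (p + q) i j = ec p i j + ec q i j"
  by (simp add: ec_def)

lemma ec_0[simp]: "ec 0 i j = 0"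
  by (simp add: ec_def)

lemma ec_neg: "i < 0 \<or> j < 0 \<Longrightarrow> ec p i j = 0"
  by (auto simp: ec_def)

lemma ec_smult[simp]: "ec (smult [:c:] p) i j = c * ec p i j"
  by (simp add: ec_def)

lemma ec_sum: "ec (sum f F) i j = (\<Sum>x\<in>F. ec (f x) i j)"
  by (induction F rule: infinite_finite_induct) auto

lemma ec_monom_mult: "ec (tu_monom a b * p) i j = ec p (i - int a) (j - int b)"
proof -
  have "coeff (coeff (tu_monom a b * p) (nat j)) (nat i) =
        (if nat j < b then 0 else if nat i < a then 0 else coeff (coeff p (nat j - b)) (nat i - a))"
    by (simp add: tu_monom_def coeff_monom_mult)
  then show ?thesis unfolding ec_def
    by (auto simp: nat_diff_distrib)
qed

lemma ec_tu_monom: "ec (tu_monom a b) i j = (if i = int a \<and> j = int b then 1 else 0)"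
  by (auto simp: ec_def tu_monom_def coeff_monom)

lemma ec_eqI: "(\<And>i j. ec p i j = ec q i j) \<Longrightarrow> p = q"
proof (rule poly_eqI, rule poly_eqI)
  fix n m assume "\<And>i j. ec p i j = ec q i j"
  from this[of "int m" "int n"] show "coeff (coeff p n) m = coeff (coeff q n) m"
    by (simp add: ec_def)
qed

lemma ec_dt: "ec (map_poly pderiv p) i j = of_int (i + 1) * ec p (i + 1) j"
proof (cases "0 \<le> i \<and> 0 \<le> j")
  case True
  have n: "nat (i+1) = Suc (nat i)" using True by arith
  have o: "(of_int (i + 1) :: 'a) = of_nat (Suc (nat i))" using True by simp
  show ?thesis using True
    by (simp only: ec_def n o coeff_map_poly coeff_pderiv pderiv_0) simp
next
  case False
  then show ?thesis
    by (cases "i = -1") (auto simp: ec_def)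
qed

lemma ec_du: "ec (pderiv p) i j = of_int (j + 1) * ec p i (j + 1)"
proof (cases "0 \<le> i \<and> 0 \<le> j")
  case True
  have *: "coeff (of_nat n * q) m = of_nat n * coeff q m" for n m and q :: "'a poly"
    by (simp add: of_nat_poly)
  have n: "nat (j+1) = Suc (nat j)" using True by arith
  have o: "(of_int (j + 1) :: 'a) = of_nat (Suc (nat j))" using True by simp
  show ?thesis using True
    by (simp only: ec_def n o coeff_pderiv *) simp
next
  case False
  then show ?thesis
    by (cases "j = -1") (auto simp: ec_def)
qed

lemma tu_monom_mult: "tu_monom a b * tu_monom c d = (tu_monom (a + c) (b + d) :: 'k::comm_semiring_1 poly poly)"
  by (simp add: tu_monom_def mult_monom)

lemma tu_monom_power: "tu_monom a b ^ n = (tu_monom (n * a) (n * b) :: 'k::comm_semiring_1 poly poly)"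
  by (simp add: tu_monom_def monom_power mult.commute)

lemma tu_monom_0: "tu_monom 0 0 = 1"
  by (simp add: tu_monom_def one_pCons monom_0)

definition inSZ :: "nat \<Rightarrow> nat \<Rightarrow> int \<Rightarrow> int \<Rightarrow> bool" where
  "inSZ n0 n1 a b \<longleftrightarrow> (\<exists>Y X Z::nat. a = int Y * int n0 + int Z * int n1 \<and>
       b = int X * int n1 + int Y * (int n1 - int n0))"

lemma inSZ_nonneg: "n0 \<le> n1 \<Longrightarrow> inSZ n0 n1 a b \<Longrightarrow> 0 \<le> a \<and> 0 \<le> b"
  unfolding inSZ_def by auto

lemma inS_nat: "n0 \<le> n1 \<Longrightarrow> (i, j) \<in> semigroupS n0 n1 \<longleftrightarrow> inSZ n0 n1 (int i) (int j)"
  unfolding inSZ_def semigroupS_def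
proof (standard, goal_cases)
  case 1
  then obtain x y z where "i = y * n0 + z * n1" "j = x * n1 + y * (n1 - n0)" by auto
  then show ?case using 1 by (intro exI[of _ y] exI[of _ x] exI[of _ z]) (simp add: of_nat_diff)
next
  case 2
  then obtain Y X Z where h: "int i = int Y * int n0 + int Z * int n1"
    "int j = int X * int n1 + int Y * (int n1 - int n0)" by blast
  have "i = Y * n0 + Z * n1" using h(1) by (metis of_nat_add of_nat_mult of_nat_eq_iff)
  moreover have "j = X * n1 + Y * (n1 - n0)" using h(2) 2(1)
    by (metis of_nat_add of_nat_mult of_nat_eq_iff of_nat_diff)
  ultimately show ?case by auto
qed

lemma semiring_iff:
  assumes "n0 \<le> n1"
  shows "p \<in> semigroup_ring (semigroupS n0 n1) \<longleftrightarrow> (\<forall>i j. ec p i j \<noteq> 0 \<longrightarrow> inSZ n0 n1 i j)"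
proof
  assume h: "p \<in> semigroup_ring (semigroupS n0 n1)"
  show "\<forall>i j. ec p i j \<noteq> 0 \<longrightarrow> inSZ n0 n1 i j"
  proof (intro allI impI)
    fix i j assume "ec p i j \<noteq> 0"
    then have "0 \<le> i" "0 \<le> j" "coeff (coeff p (nat j)) (nat i) \<noteq> 0" by (auto simp: ec_def split: if_splits)
    with h have "(nat i, nat j) \<in> semigroupS n0 n1" by (auto simp: semigroup_ring_def)
    with assms \<open>0 \<le> i\<close> \<open>0 \<le> j\<close> show "inSZ n0 n1 i j" by (simp add: inS_nat)
  qed
next
  assume h: "\<forall>i j. ec p i j \<noteq> 0 \<longrightarrow> inSZ n0 n1 i j"
  show "p \<in> semigroup_ring (semigroupS n0 n1)"
    unfolding semigroup_ring_def
  proof (intro CollectI allI impI)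
    fix i j assume "coeff (coeff p j) i \<noteq> 0"
    then have "ec p (int i) (int j) \<noteq> 0" by (simp add: ec_def)
    with h have "inSZ n0 n1 (int i) (int j)" by blast
    with assms show "(i, j) \<in> semigroupS n0 n1" by (simp add: inS_nat)
  qed
qed

lemma inSZ_intro:
  assumes "0 \<le> Y" "0 \<le> X" "0 \<le> Z" "a = Y * int n0 + Z * int n1" "b = X * int n1 + Y * (int n1 - int n0)"
  shows "inSZ n0 n1 a b"
  unfolding inSZ_def
  using assms by (intro exI[of _ "nat Y"] exI[of _ "nat X"] exI[of _ "nat Z"]) simp

lemma inSZ_decomp:
  assumes "0 < n1" "n0 \<le> n1" "inSZ n0 n1 a b"
  shows "\<exists>r i k. 0 \<le> r \<and> r < int n1 \<and> 0 \<le> i \<and> 0 \<le> k \<and>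
     a = r * int n0 + k * int n1 \<and> b = r * (int n1 - int n0) + i * int n1"
proof -
  obtain Y X Z :: nat where h: "a = int Y * int n0 + int Z * int n1"
       "b = int X * int n1 + int Y * (int n1 - int n0)" using assms(3) unfolding inSZ_def by blast
  obtain q r :: int where Y: "int Y = q * int n1 + r" and r: "0 \<le> r" "r < int n1" and q0: "0 \<le> q"
  proof -
    have "int Y = (int Y div int n1) * int n1 + int Y mod int n1" by simp
    moreover have "0 \<le> int Y mod int n1" "int Y mod int n1 < int n1" using assms(1) by auto
    moreover have "0 \<le> int Y div int n1" by (simp add: zdiv_int[symmetric])
    ultimately show ?thesis using that by blast
  qed
  have d: "0 \<le> int n1 - int n0" using assms(2) by simp
  have a: "a = r * int n0 + (q * int n0 + int Z) * int n1" using h(1) Y by (simp add: algebra_simps)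
  have b: "b = r * (int n1 - int n0) + (int X + q * (int n1 - int n0)) * int n1"
    using h(2) Y by (simp add: algebra_simps)
  show ?thesis
    apply (rule exI[of _ r], rule exI[of _ "int X + q * (int n1 - int n0)"], rule exI[of _ "q * int n0 + int Z"])
    using a b r q0 d by simp
qed

lemma inSZ_unique:
  assumes "n0 < n1" "coprime n0 n1" "0 \<le> r" "r < int n1"
     "inSZ n0 n1 (r * int n0 + k * int n1) (r * (int n1 - int n0) + i * int n1)"
  shows "0 \<le> i \<and> 0 \<le> k"
proof -
  obtain Y X Z :: nat where h: "r * int n0 + k * int n1 = int Y * int n0 + int Z * int n1"
       "r * (int n1 - int n0) + i * int n1 = int X * int n1 + int Y * (int n1 - int n0)"
    using assms(5) unfolding inSZ_def by blast
  have "(int Y - r) * int n0 = int n1 * (k - int Z)"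
    using h(1) by (simp add: algebra_simps)
  then have "int n1 dvd (int Y - r) * int n0" by simp
  moreover have "coprime (int n1) (int n0)" using assms(2) by (simp add: coprime_commute)
  ultimately have "int n1 dvd (int Y - r)" using coprime_dvd_mult_left_iff by blast
  then obtain t where t: "int Y - r = int n1 * t" by blast
  have "t \<ge> 0"
  proof (rule ccontr)
    assume "\<not> t \<ge> 0" then have "t \<le> -1" by simp
    then have "int n1 * t \<le> - int n1" using mult_left_mono[of t "-1" "int n1"] by simp
    then show False using t assms(4) by simp
  qed
  have n1: "int n1 > 0" using assms(1) by simp
  have "k * int n1 = (t * int n0 + int Z) * int n1" using h(1) t by (simp add: algebra_simps)
  then have k: "k = t * int n0 + int Z" using n1 by simp
  have "i * int n1 = (int X + t * (int n1 - int n0)) * int n1" using h(2) t by (simp add: algebra_simps)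
  then have i: "i = int X + t * (int n1 - int n0)" using n1 by simp
  show ?thesis using k i \<open>t \<ge> 0\<close> assms(1) by simp
qed

locale sgset =
  fixes n0 n1 :: nat
  assumes n0pos: "0 < n0" and n01: "n0 < n1" and cop: "coprime n0 n1"
begin

abbreviation "S \<equiv> inSZ n0 n1"

lemma decomp:
  assumes "S a b"
  obtains r i k where "0 \<le> r" "r < int n1" "0 \<le> i" "0 \<le> k"
     "a = r * int n0 + k * int n1" "b = r * (int n1 - int n0) + i * int n1"
  using inSZ_decomp[of n1 n0 a b] assms n01 n0pos by auto

lemma uniq:
  assumes "0 \<le> r" "r < int n1" "S (r * int n0 + k * int n1) (r * (int n1 - int n0) + i * int n1)"
  shows "0 \<le> i \<and> 0 \<le> k"
  using inSZ_unique[OF n01 cop assms] .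

lemma F1:
  assumes "S a b" "a \<noteq> 0"
  shows "S (a + (int n1 - 1) * int n0 - int n1) (b + (int n1 - 1) * (int n1 - int n0))"
proof -
  obtain r i k where h: "0 \<le> r" "r < int n1" "0 \<le> i" "0 \<le> k"
     "a = r * int n0 + k * int n1" "b = r * (int n1 - int n0) + i * int n1"
    using decomp[OF assms(1)] by blast
  show ?thesis
  proof (cases "k \<ge> 1")
    case True
    show ?thesis
      by (rule inSZ_intro[of "r + int n1 - 1" i "k - 1"]) (use h True n01 in \<open>auto simp: algebra_simps\<close>)
  next
    case False
    then have k: "k = 0" using h by simp
    then have "r \<noteq> 0" using assms(2) h by auto
    then have "r \<ge> 1" using h by simp
    show ?thesis
      by (rule inSZ_intro[of "r - 1" "i + int n1 - int n0" "int n0 - 1"])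
         (use h k \<open>r \<ge> 1\<close> n01 n0pos in \<open>auto simp: algebra_simps\<close>)
  qed
qed

lemma F2:
  assumes "S a b" "b \<noteq> 0"
  shows "S (a + (int n1 - 1) * int n0) (b + (int n1 - 1) * (int n1 - int n0) - int n1)"
proof -
  obtain r i k where h: "0 \<le> r" "r < int n1" "0 \<le> i" "0 \<le> k"
     "a = r * int n0 + k * int n1" "b = r * (int n1 - int n0) + i * int n1"
    using decomp[OF assms(1)] by blast
  show ?thesis
  proof (cases "i \<ge> 1")
    case True
    show ?thesis
      by (rule inSZ_intro[of "r + int n1 - 1" "i - 1" k]) (use h True n01 in \<open>auto simp: algebra_simps\<close>)
  next
    case False
    then have i: "i = 0" using h by simp
    then have "r \<noteq> 0" using assms(2) h by auto
    then have "r \<ge> 1" using h by simp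
    show ?thesis
      by (rule inSZ_intro[of "r - 1" "int n1 - int n0 - 1" "k + int n0"])
         (use h i \<open>r \<ge> 1\<close> n01 n0pos in \<open>auto simp: algebra_simps\<close>)
  qed
qed

lemma F3:
  assumes "S a b" "\<not> S (a - int n1) b"
    "\<not> S (a - (int n1 - 1) * int n0) (b - (int n1 - 1) * (int n1 - int n0))"
  shows "\<not> S (a - int n1 + int n0) (b + (int n1 - int n0)) \<and> \<not> S (a - int n1) (b + int n1)"
proof -
  obtain r i k where h: "0 \<le> r" "r < int n1" "0 \<le> i" "0 \<le> k"
     "a = r * int n0 + k * int n1" "b = r * (int n1 - int n0) + i * int n1"
    using decomp[OF assms(1)] by blast
  have k: "k = 0"
  proof (rule ccontr)
    assume "k \<noteq> 0"
    then have "S (a - int n1) b"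
      by (intro inSZ_intro[of r i "k - 1"]) (use h in \<open>auto simp: algebra_simps\<close>)
    with assms(2) show False by blast
  qed
  have r: "r < int n1 - 1"
  proof (rule ccontr)
    assume "\<not> r < int n1 - 1"
    then have rr: "r = int n1 - 1" using h by simp
    have "S (a - (int n1 - 1) * int n0) (b - (int n1 - 1) * (int n1 - int n0))"
      by (rule inSZ_intro[of 0 i 0]) (simp_all add: h(3,5,6) k rr)
    with assms(3) show False by blast
  qed
  have 1: "\<not> S (a - int n1 + int n0) (b + (int n1 - int n0))"
  proof
    assume "S (a - int n1 + int n0) (b + (int n1 - int n0))"
    moreover have "a - int n1 + int n0 = (r + 1) * int n0 + (-1) * int n1"
        "b + (int n1 - int n0) = (r + 1) * (int n1 - int n0) + i * int n1"
      using h k by (auto simp: algebra_simps)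
    ultimately have "S ((r + 1) * int n0 + (-1) * int n1) ((r + 1) * (int n1 - int n0) + i * int n1)"
      by simp
    from uniq[OF _ _ this] h r show False by simp
  qed
  have 2: "\<not> S (a - int n1) (b + int n1)"
  proof
    assume "S (a - int n1) (b + int n1)"
    moreover have "a - int n1 = r * int n0 + (-1) * int n1"
        "b + int n1 = r * (int n1 - int n0) + (i + 1) * int n1"
      using h k by (auto simp: algebra_simps)
    ultimately have "S (r * int n0 + (-1) * int n1) (r * (int n1 - int n0) + (i + 1) * int n1)"
      by simp
    from uniq[OF _ _ this] h show False by simp
  qed
  show ?thesis using 1 2 by blast
qed

lemma F4:
  assumes "S a b" "\<not> S a (b - int n1)"
    "\<not> S (a - (int n1 - 1) * int n0) (b - (int n1 - 1) * (int n1 - int n0))"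
  shows "\<not> S (a + int n0) (b - int n1 + (int n1 - int n0)) \<and> \<not> S (a + int n1) (b - int n1)"
proof -
  obtain r i k where h: "0 \<le> r" "r < int n1" "0 \<le> i" "0 \<le> k"
     "a = r * int n0 + k * int n1" "b = r * (int n1 - int n0) + i * int n1"
    using decomp[OF assms(1)] by blast
  have i: "i = 0"
  proof (rule ccontr)
    assume "i \<noteq> 0"
    then have "S a (b - int n1)"
      by (intro inSZ_intro[of r "i - 1" k]) (use h in \<open>auto simp: algebra_simps\<close>)
    with assms(2) show False by blast
  qed
  have r: "r < int n1 - 1"
  proof (rule ccontr)
    assume "\<not> r < int n1 - 1"
    then have rr: "r = int n1 - 1" using h by simp
    have "S (a - (int n1 - 1) * int n0) (b - (int n1 - 1) * (int n1 - int n0))"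
      by (rule inSZ_intro[of 0 0 k]) (simp_all add: h(4,5,6) i rr)
    with assms(3) show False by blast
  qed
  have 1: "\<not> S (a + int n0) (b - int n1 + (int n1 - int n0))"
  proof
    assume "S (a + int n0) (b - int n1 + (int n1 - int n0))"
    moreover have "a + int n0 = (r + 1) * int n0 + k * int n1"
        "b - int n1 + (int n1 - int n0) = (r + 1) * (int n1 - int n0) + (-1) * int n1"
      using h i by (auto simp: algebra_simps)
    ultimately have "S ((r + 1) * int n0 + k * int n1) ((r + 1) * (int n1 - int n0) + (-1) * int n1)"
      by simp
    from uniq[OF _ _ this] h r show False by simp
  qed
  have 2: "\<not> S (a + int n1) (b - int n1)"
  proof
    assume "S (a + int n1) (b - int n1)"
    moreover have "a + int n1 = r * int n0 + (k + 1) * int n1"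
        "b - int n1 = r * (int n1 - int n0) + (-1) * int n1"
      using h i by (auto simp: algebra_simps)
    ultimately have "S (r * int n0 + (k + 1) * int n1) (r * (int n1 - int n0) + (-1) * int n1)"
      by simp
    from uniq[OF _ _ this] h show False by simp
  qed
  show ?thesis using 1 2 by blast
qed

lemma F5a: "\<not> S ((int n1 - 1) * int n0 - int n1) ((int n1 - 1) * (int n1 - int n0))"
proof
  assume "S ((int n1 - 1) * int n0 - int n1) ((int n1 - 1) * (int n1 - int n0))"
  then have "S ((int n1 - 1) * int n0 + (-1) * int n1) ((int n1 - 1) * (int n1 - int n0) + 0 * int n1)"
    by simp
  from uniq[OF _ _ this] n01 show False by simp
qed

lemma F5b: "\<not> S ((int n1 - 1) * int n0) ((int n1 - 1) * (int n1 - int n0) - int n1)"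
proof
  assume "S ((int n1 - 1) * int n0) ((int n1 - 1) * (int n1 - int n0) - int n1)"
  then have "S ((int n1 - 1) * int n0 + 0 * int n1) ((int n1 - 1) * (int n1 - int n0) + (-1) * int n1)"
    by simp
  from uniq[OF _ _ this] n01 show False by simp
qed

end

lemma pderiv_sum': "pderiv (sum f A) = (\<Sum>x\<in>A. pderiv (f x))"
  by (induction A rule: infinite_finite_induct) (auto simp: pderiv_add)

lemma dt_add: "map_poly pderiv (p + q) = map_poly pderiv p + (map_poly pderiv q :: 'k::field poly poly)"
  by (rule poly_eqI) (simp add: coeff_map_poly pderiv_add)

lemma dt_smult: "map_poly pderiv (smult [:c:] p) = smult [:c:] (map_poly pderiv p :: 'k::field poly poly)"
  by (rule poly_eqI) (simp add: coeff_map_poly pderiv_smult)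

lemma dt_mult: "map_poly pderiv (p * q) = p * map_poly pderiv q + map_poly pderiv p * (q :: 'k::field poly poly)"
proof (rule poly_eqI)
  fix n
  show "coeff (map_poly pderiv (p * q)) n = coeff (p * map_poly pderiv q + map_poly pderiv p * q) n"
  proof -
    have e: "coeff (map_poly pderiv p * q) n = (\<Sum>i\<le>n. pderiv (coeff p i) * coeff q (n - i))"
      by (simp add: coeff_mult coeff_map_poly)
    show ?thesis
      by (simp only: coeff_add e) (simp add: coeff_map_poly coeff_mult pderiv_sum' pderiv_mult sum.distrib mult.commute)
  qed
qed

context sgset
begin

abbreviation "AA \<equiv> (semigroup_ring (semigroupS n0 n1) :: 'k::field_char_0 poly poly set)"

lemma memA: "p \<in> AA \<longleftrightarrow> (\<forall>i j. ec p i j \<noteq> 0 \<longrightarrow> S i j)"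
  using semiring_iff[of n0 n1 p] n01 by simp

lemma dT_der:
  assumes "\<And>i j. S i j \<Longrightarrow> i \<noteq> 0 \<Longrightarrow> S (i + int a - 1) (j + int b)"
  shows "is_derivation (AA :: 'k::field_char_0 poly poly set) (dT a b)"
  unfolding is_derivation_def
proof (intro conjI ballI allI)
  fix p :: "'k poly poly" assume p: "p \<in> AA"
  show "dT a b p \<in> AA" unfolding memA
  proof (intro allI impI)
    fix I J assume "ec (dT a b p) I J \<noteq> 0"
    then have "of_int (I - int a + 1) * ec p (I - int a + 1) (J - int b) \<noteq> (0::'k)"
      by (simp add: dT_def ec_monom_mult ec_dt)
    then have h1: "(of_int (I - int a + 1) :: 'k) \<noteq> 0" and h2: "ec p (I - int a + 1) (J - int b) \<noteq> 0"
      by (metis mult_zero_left, metis mult_zero_right)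
    from h1 have "I - int a + 1 \<noteq> 0" by (metis of_int_0)
    note calculation = this h2
    moreover have "S (I - int a + 1) (J - int b)" using p calculation(2) memA by blast
    ultimately have "S (I - int a + 1 + int a - 1) (J - int b + int b)" using assms by blast
    then show "S I J" by simp
  qed
next
  fix p q :: "'k poly poly"
  show "dT a b (p + q) = dT a b p + dT a b q" by (simp add: dT_def dt_add distrib_left)
  show "dT a b (p * q) = p * dT a b q + q * dT a b p" by (simp add: dT_def dt_mult algebra_simps)
next
  fix c :: 'k and p :: "'k poly poly"
  show "dT a b (smult [:c:] p) = smult [:c:] (dT a b p)" by (simp add: dT_def dt_smult)
qed

lemma dU_der:
  assumes "\<And>i j. S i j \<Longrightarrow> j \<noteq> 0 \<Longrightarrow> S (i + int a) (j + int b - 1)"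
  shows "is_derivation (AA :: 'k::field_char_0 poly poly set) (dU a b)"
  unfolding is_derivation_def
proof (intro conjI ballI allI)
  fix p :: "'k poly poly" assume p: "p \<in> AA"
  show "dU a b p \<in> AA" unfolding memA
  proof (intro allI impI)
    fix I J assume "ec (dU a b p) I J \<noteq> 0"
    then have "of_int (J - int b + 1) * ec p (I - int a) (J - int b + 1) \<noteq> (0::'k)"
      by (simp add: dU_def ec_monom_mult ec_du)
    then have h1: "(of_int (J - int b + 1) :: 'k) \<noteq> 0" and h2: "ec p (I - int a) (J - int b + 1) \<noteq> 0"
      by (metis mult_zero_left, metis mult_zero_right)
    from h1 have "J - int b + 1 \<noteq> 0" by (metis of_int_0)
    note calculation = this h2
    moreover have "S (I - int a) (J - int b + 1)" using p calculation(2) memA by blast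
    ultimately have "S (I - int a + int a) (J - int b + 1 + int b - 1)" using assms by blast
    then show "S I J" by simp
  qed
next
  fix p q :: "'k poly poly"
  show "dU a b (p + q) = dU a b p + dU a b q" by (simp add: dU_def pderiv_add distrib_left)
  show "dU a b (p * q) = p * dU a b q + q * dU a b p" by (simp add: dU_def pderiv_mult algebra_simps)
next
  fix c :: 'k and p :: "'k poly poly"
  show "dU a b (smult [:c:] p) = smult [:c:] (dU a b p)" by (simp add: dU_def pderiv_smult)
qed

definition "a2 = n0 * (n1 - 1) + 1 - n1"
definition "b2 = (n1 - 1) * (n1 - n0)"
definition "a3 = n0 * (n1 - 1)"
definition "b3 = (n1 - 1) * (n1 - n0) + 1 - n1"

lemma a2_int: "int a2 = (int n1 - 1) * int n0 - int n1 + 1"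
proof -
  have "n1 - 1 \<le> n0 * (n1 - 1)" using n0pos by simp
  then have "n0 * (n1 - 1) + 1 \<ge> n1" by linarith
  then show ?thesis unfolding a2_def using n01 by (simp add: of_nat_diff algebra_simps)
qed

lemma b3_int: "int b3 = (int n1 - 1) * (int n1 - int n0) + 1 - int n1"
proof -
  have "1 \<le> n1 - n0" using n01 by simp
  then have "n1 - 1 \<le> (n1 - 1) * (n1 - n0)" using mult_le_mono2[of 1 "n1 - n0" "n1 - 1"] by simp
  then have "(n1 - 1) * (n1 - n0) + 1 \<ge> n1" by linarith
  then have e: "int ((n1 - 1) * (n1 - n0) + 1 - n1) = int ((n1 - 1) * (n1 - n0)) + 1 - int n1"
    by (simp add: of_nat_diff)
  have e1: "int (n1 - 1) = int n1 - 1" "int (n1 - n0) = int n1 - int n0" using n01 by auto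
  show ?thesis unfolding b3_def e of_nat_mult e1 ..
qed

lemma b2_int: "int b2 = (int n1 - 1) * (int n1 - int n0)"
  unfolding b2_def using n01 by (simp add: of_nat_diff)

lemma a3_int: "int a3 = (int n1 - 1) * int n0"
  unfolding a3_def using n01 by (simp add: of_nat_diff algebra_simps)

lemma der1: "is_derivation AA (dT 1 0)"
  by (rule dT_der) simp

lemma der2: "is_derivation AA (dT a2 b2)"
proof (rule dT_der)
  fix i j assume "S i j" "i \<noteq> 0"
  from F1[OF this] show "S (i + int a2 - 1) (j + int b2)" by (simp add: a2_int b2_int algebra_simps)
qed

lemma der3: "is_derivation AA (dU 0 1)"
  by (rule dU_der) simp

lemma der4: "is_derivation AA (dU a3 b3)"
proof (rule dU_der)
  fix i j assume "S i j" "j \<noteq> 0"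
  from F2[OF this] show "S (i + int a3) (j + int b3 - 1)" by (simp add: a3_int b3_int algebra_simps)
qed

end

definition leib :: "'k::field poly poly set \<Rightarrow> ('k poly poly \<Rightarrow> 'k poly poly) \<Rightarrow> bool" where
  "leib A D \<longleftrightarrow>
     (\<forall>p\<in>A. \<forall>q\<in>A. D (p + q) = D p + D q) \<and>
     (\<forall>c. \<forall>p\<in>A. D (smult [:c:] p) = smult [:c:] (D p)) \<and>
     (\<forall>p\<in>A. \<forall>q\<in>A. D (p * q) = p * D q + q * D p)"

lemma leib_of_der: "is_derivation A D \<Longrightarrow> leib A D"
  unfolding is_derivation_def leib_def by blast

lemma smult_sum_right: "smult a (sum f F) = (\<Sum>x\<in>F. smult a (f x))"
  by (induction F rule: infinite_finite_induct) (auto simp: smult_add_right)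

lemma leib_comb:
  assumes "\<And>g. g \<in> F \<Longrightarrow> leib A g"
  shows "leib A (\<lambda>p. \<Sum>g\<in>F. c g * g p)"
  unfolding leib_def
proof (intro conjI ballI allI)
  fix p q assume p: "p \<in> A" and q: "q \<in> A"
  show "(\<Sum>g\<in>F. c g * g (p + q)) = (\<Sum>g\<in>F. c g * g p) + (\<Sum>g\<in>F. c g * g q)"
  proof -
    have "(\<Sum>g\<in>F. c g * g (p + q)) = (\<Sum>g\<in>F. c g * g p + c g * g q)"
    proof (rule sum.cong)
      fix g assume "g \<in> F"
      then have "g (p + q) = g p + g q" using assms p q unfolding leib_def by blast
      then show "c g * g (p + q) = c g * g p + c g * g q" by (simp add: distrib_left)
    qed simp
    then show ?thesis by (simp add: sum.distrib)
  qed
  have "(\<Sum>g\<in>F. c g * g (p * q)) = (\<Sum>g\<in>F. p * (c g * g q) + q * (c g * g p))"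
  proof (rule sum.cong)
    fix g assume "g \<in> F"
    then have "g (p * q) = p * g q + q * g p" using assms p q unfolding leib_def by blast
    then show "c g * g (p * q) = p * (c g * g q) + q * (c g * g p)" by (simp add: algebra_simps)
  qed simp
  also have "\<dots> = p * (\<Sum>g\<in>F. c g * g q) + q * (\<Sum>g\<in>F. c g * g p)"
    by (simp add: sum.distrib sum_distrib_left)
  finally show "(\<Sum>g\<in>F. c g * g (p * q)) = p * (\<Sum>g\<in>F. c g * g q) + q * (\<Sum>g\<in>F. c g * g p)" .
next
  fix a p assume p: "p \<in> A"
  have "(\<Sum>g\<in>F. c g * g (smult [:a:] p)) = (\<Sum>g\<in>F. smult [:a:] (c g * g p))"
  proof (rule sum.cong)
    fix g assume "g \<in> F"
    then have "g (smult [:a:] p) = smult [:a:] (g p)" using assms p unfolding leib_def by blast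
    then show "c g * g (smult [:a:] p) = smult [:a:] (c g * g p)" by simp
  qed simp
  then show "(\<Sum>g\<in>F. c g * g (smult [:a:] p)) = smult [:a:] (\<Sum>g\<in>F. c g * g p)"
    by (simp add: smult_sum_right)
qed

lemma leib_one: "leib A D \<Longrightarrow> 1 \<in> A \<Longrightarrow> D 1 = 0"
  unfolding leib_def by (metis add_cancel_right_right mult_1 mult_1_right)

lemma leib_zero: "leib A D \<Longrightarrow> 0 \<in> A \<Longrightarrow> D 0 = 0"
  unfolding leib_def by (metis add_cancel_right_right add_0)

lemma leib_power:
  assumes "leib A D" "\<And>k. p ^ k \<in> A"
  shows "D (p ^ Suc n) = of_nat (Suc n) * p ^ n * D p"
proof (induction n)
  case 0
  have "D (p * 1) = p * D 1 + 1 * D p" using assms(1) assms(2)[of 1] assms(2)[of 0] unfolding leib_def by auto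
  then show ?case using leib_one[OF assms(1)] assms(2)[of 0] by simp
next
  case (Suc n)
  have "D (p ^ Suc (Suc n)) = D (p * p ^ Suc n)" by simp
  also have "\<dots> = p * D (p ^ Suc n) + p ^ Suc n * D p"
    using assms(1) assms(2)[of 1] assms(2)[of "Suc n"] unfolding leib_def by auto
  also have "\<dots> = of_nat (Suc (Suc n)) * p ^ Suc n * D p" using Suc by (simp add: algebra_simps)
  finally show ?case .
qed

lemma ec_of_nat_mult: "ec (of_nat n * p) i j = of_nat n * ec (p :: 'k::comm_ring_1 poly poly) i j"
proof -
  have "(of_nat n :: 'k poly poly) * p = smult [:of_nat n:] p"
    by (simp add: of_nat_poly)
  then show ?thesis by simp
qed

context sgset
begin

lemma monom_in: "S (int a) (int b) \<Longrightarrow> tu_monom a b \<in> AA"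
  unfolding memA by (auto simp: ec_tu_monom split: if_splits)

abbreviation "xm \<equiv> tu_monom 0 n1"
abbreviation "ym \<equiv> tu_monom n0 (n1 - n0)"
abbreviation "zm \<equiv> tu_monom n1 0"

lemma S_x: "S (int k * 0) (int k * int n1)"
  by (rule inSZ_intro[of 0 "int k" 0]) auto
lemma S_y: "S (int k * int n0) (int k * (int n1 - int n0))"
  by (rule inSZ_intro[of "int k" 0 0]) auto
lemma S_z: "S (int k * int n1) (int k * 0)"
  by (rule inSZ_intro[of 0 0 "int k"]) auto

lemma xpow_in: "xm ^ k \<in> AA" unfolding tu_monom_power
  by (rule monom_in) (use S_x[of k] in simp)
lemma ypow_in: "ym ^ k \<in> AA" unfolding tu_monom_power
  by (rule monom_in) (use S_y[of k] n01 in \<open>simp add: of_nat_diff\<close>)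
lemma zpow_in: "zm ^ k \<in> AA" unfolding tu_monom_power
  by (rule monom_in) (use S_z[of k] in simp)

lemma relation:
  assumes "leib AA D"
  shows "of_nat n1 * ym ^ (n1 - 1) * D ym =
         of_nat n0 * (xm ^ (n1 - n0) * zm ^ (n0 - 1)) * D zm +
         of_nat (n1 - n0) * (xm ^ (n1 - n0 - 1) * zm ^ n0) * D xm"
proof -
  have eq: "ym ^ n1 = xm ^ (n1 - n0) * zm ^ n0"
    by (simp add: tu_monom_power tu_monom_mult mult.commute)
  have h1: "D (ym ^ n1) = of_nat n1 * ym ^ (n1 - 1) * D ym"
    using leib_power[OF assms ypow_in, of "n1 - 1"] n01 by simp
  have h2: "D (xm ^ (n1 - n0) * zm ^ n0) =
      xm ^ (n1 - n0) * D (zm ^ n0) + zm ^ n0 * D (xm ^ (n1 - n0))"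
    using assms xpow_in zpow_in unfolding leib_def by blast
  have h3: "D (zm ^ n0) = of_nat n0 * zm ^ (n0 - 1) * D zm"
    using leib_power[OF assms zpow_in, of "n0 - 1"] n0pos by simp
  have h4: "D (xm ^ (n1 - n0)) = of_nat (n1 - n0) * xm ^ (n1 - n0 - 1) * D xm"
  proof -
    have "Suc (n1 - n0 - 1) = n1 - n0" using n01 by simp
    then show ?thesis using leib_power[OF assms xpow_in, of "n1 - n0 - 1"] by simp
  qed
  have "of_nat n1 * ym ^ (n1 - 1) * D ym = D (ym ^ n1)" using h1 by simp
  also have "\<dots> = D (xm ^ (n1 - n0) * zm ^ n0)" by (simp only: eq)
  also have "\<dots> = xm ^ (n1 - n0) * (of_nat n0 * zm ^ (n0 - 1) * D zm) +
      zm ^ n0 * (of_nat (n1 - n0) * xm ^ (n1 - n0 - 1) * D xm)" using h2 h3 h4 by simp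
  also have "\<dots> = of_nat n0 * (xm ^ (n1 - n0) * zm ^ (n0 - 1)) * D zm +
         of_nat (n1 - n0) * (xm ^ (n1 - n0 - 1) * zm ^ n0) * D xm" by (simp only: ac_simps)
  finally show ?thesis .
qed

end

lemma sum_in_set:
  assumes "0 \<in> M" "\<And>a b. a \<in> M \<Longrightarrow> b \<in> M \<Longrightarrow> a + b \<in> M" "\<And>x. x \<in> F \<Longrightarrow> f x \<in> M"
  shows "sum f F \<in> M"
  using assms(3)
proof (induction F rule: infinite_finite_induct)
  case (insert x F)
  then show ?case using assms(2) by simp
qed (use assms(1) in auto)

lemma supp_closure:
  fixes p :: "'k::comm_semiring_1 poly poly"
  assumes "0 \<in> M" "\<And>a b. a \<in> M \<Longrightarrow> b \<in> M \<Longrightarrow> a + b \<in> M"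
    "\<And>i j c. c \<noteq> 0 \<Longrightarrow> C i j \<Longrightarrow> monom (monom c i) j \<in> M"
    "\<And>i j. coeff (coeff p j) i \<noteq> 0 \<Longrightarrow> C i j"
  shows "p \<in> M"
proof -
  have "p = (\<Sum>j\<le>degree p. monom (coeff p j) j)" by (simp add: poly_as_sum_of_monoms)
  also have "\<dots> = (\<Sum>j\<le>degree p. \<Sum>i\<le>degree (coeff p j). monom (monom (coeff (coeff p j) i) i) j)"
    by (simp add: poly_as_sum_of_monoms monom_sum[symmetric])
  also have "\<dots> \<in> M"
  proof (rule sum_in_set[OF assms(1,2)])
    fix j
    show "(\<Sum>i\<le>degree (coeff p j). monom (monom (coeff (coeff p j) i) i) j) \<in> M"
    proof (rule sum_in_set[OF assms(1,2)])
      fix i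
      show "monom (monom (coeff (coeff p j) i) i) j \<in> M"
        using assms(1) assms(3)[of "coeff (coeff p j) i" i j] assms(4)[of j i]
        by (cases "coeff (coeff p j) i = 0") auto
    qed
  qed
  finally show ?thesis .
qed

lemma monom_smult: "monom (monom c i) j = smult [:c:] (tu_monom i j)"
  by (simp add: tu_monom_def smult_monom)

context sgset
begin

lemma zero_in: "0 \<in> AA" unfolding memA by simp

lemma add_in: "p \<in> AA \<Longrightarrow> q \<in> AA \<Longrightarrow> p + q \<in> AA"
  unfolding memA by (metis add.right_neutral add_0 ec_add)

lemma smult_in: "p \<in> AA \<Longrightarrow> smult [:c:] p \<in> AA"
  unfolding memA by simp

lemma monoXYZ: "xm ^ X * ym ^ Y * zm ^ Z = tu_monom (Y * n0 + Z * n1) (X * n1 + Y * (n1 - n0))"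
  by (simp add: tu_monom_power tu_monom_mult)

lemma monoXYZ_in: "tu_monom (Y * n0 + Z * n1) (X * n1 + Y * (n1 - n0)) \<in> AA"
  by (rule monom_in, rule inSZ_intro[of "int Y" "int X" "int Z"]) (use n01 in \<open>auto simp: of_nat_diff\<close>)

lemma split_lemma:
  assumes "\<And>i j. ec p i j \<noteq> 0 \<Longrightarrow> S (i - int a) (j - int b) \<or> S (i - int a') (j - int b')"
  shows "\<exists>p1 p2. p1 \<in> AA \<and> p2 \<in> AA \<and> p = tu_monom a b * p1 + tu_monom a' b' * (p2 :: 'k::field_char_0 poly poly)"
proof -
  let ?M = "{p :: 'k poly poly. \<exists>p1 p2. p1 \<in> AA \<and> p2 \<in> AA \<and> p = tu_monom a b * p1 + tu_monom a' b' * p2}"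
  have "p \<in> ?M"
  proof (rule supp_closure[where C = "\<lambda>i j. S (int i - int a) (int j - int b) \<or> S (int i - int a') (int j - int b')"])
    show "0 \<in> ?M" using zero_in by force
  next
    fix u v assume "u \<in> ?M" "v \<in> ?M"
    then obtain u1 u2 v1 v2 where "u1 \<in> AA" "u2 \<in> AA" "v1 \<in> AA" "v2 \<in> AA"
      "u = tu_monom a b * u1 + tu_monom a' b' * u2" "v = tu_monom a b * v1 + tu_monom a' b' * v2" by blast
    then show "u + v \<in> ?M"
      by (intro CollectI exI[of _ "u1 + v1"] exI[of _ "u2 + v2"]) (auto simp: add_in algebra_simps)
  next
    fix i j and c :: 'k assume "c \<noteq> 0" and C: "S (int i - int a) (int j - int b) \<or> S (int i - int a') (int j - int b')"
    show "monom (monom c i) j \<in> ?M"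
    proof (cases "S (int i - int a) (int j - int b)")
      case True
      then have "0 \<le> int i - int a \<and> 0 \<le> int j - int b" using inSZ_nonneg[of n0 n1 "int i - int a" "int j - int b"] n01 by simp
      then have "a \<le> i" "b \<le> j" by auto
      then have e: "monom (monom c i) j = tu_monom a b * smult [:c:] (tu_monom (i - a) (j - b))"
        by (simp add: monom_smult tu_monom_mult)
      have "tu_monom (i - a) (j - b) \<in> AA" using True \<open>a \<le> i\<close> \<open>b \<le> j\<close> by (intro monom_in) (simp add: of_nat_diff)
      then show ?thesis unfolding e using zero_in smult_in by force
    next
      case False
      then have T: "S (int i - int a') (int j - int b')" using C by blast
      then have "0 \<le> int i - int a' \<and> 0 \<le> int j - int b'" using inSZ_nonneg[of n0 n1 "int i - int a'" "int j - int b'"] n01 by simp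
      then have "a' \<le> i" "b' \<le> j" by auto
      then have e: "monom (monom c i) j = tu_monom a' b' * smult [:c:] (tu_monom (i - a') (j - b'))"
        by (simp add: monom_smult tu_monom_mult)
      have "tu_monom (i - a') (j - b') \<in> AA" using T \<open>a' \<le> i\<close> \<open>b' \<le> j\<close> by (intro monom_in) (simp add: of_nat_diff)
      then show ?thesis unfolding e using zero_in smult_in by force
    qed
  next
    fix i j assume "coeff (coeff p j) i \<noteq> 0"
    then have "ec p (int i) (int j) \<noteq> 0" by (simp add: ec_def)
    then show "S (int i - int a) (int j - int b) \<or> S (int i - int a') (int j - int b')" using assms by blast
  qed
  then show ?thesis by blast
qed

lemma agree_pow:
  fixes D :: "'k::field_char_0 poly poly \<Rightarrow> 'k poly poly"
  assumes "leib AA D" "leib AA D'" "D q = D' q" "\<And>k. q ^ k \<in> AA"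
  shows "D (q ^ n) = D' (q ^ n)"
proof (cases n)
  case 0
  have "(1 :: 'k poly poly) \<in> AA" using assms(4)[of 0] by simp
  then show ?thesis using 0 leib_one[OF assms(1)] leib_one[OF assms(2)] by simp
next
  case (Suc m)
  then show ?thesis using leib_power[OF assms(1,4)] leib_power[OF assms(2,4)] assms(3) by simp
qed

lemma agree:
  fixes D :: "'k::field_char_0 poly poly \<Rightarrow> 'k poly poly"
  assumes "leib AA D" "leib AA D'" "D xm = D' xm" "D ym = D' ym" "D zm = D' zm" "p \<in> AA"
  shows "D p = D' p"
proof -
  have mono: "D (tu_monom i j) = D' (tu_monom i j)" if hS: "S (int i) (int j)" for i j
  proof -
    obtain Y X Z :: nat where h: "int i = int Y * int n0 + int Z * int n1"
       "int j = int X * int n1 + int Y * (int n1 - int n0)" using hS unfolding inSZ_def by blast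
    have "i = Y * n0 + Z * n1" using h(1) by (metis of_nat_add of_nat_mult of_nat_eq_iff)
    moreover have "j = X * n1 + Y * (n1 - n0)" using h(2) n01
      by (metis of_nat_add of_nat_mult of_nat_eq_iff of_nat_diff less_imp_le_nat)
    ultimately have e: "(tu_monom i j :: 'k poly poly) = (xm ^ X * ym ^ Y) * zm ^ Z" by (simp add: tu_monom_power tu_monom_mult)
    have e2: "(xm ^ X * ym ^ Y :: 'k poly poly) = tu_monom (Y * n0 + 0 * n1) (X * n1 + Y * (n1 - n0))"
      by (simp add: tu_monom_power tu_monom_mult)
    have inXY: "(xm ^ X * ym ^ Y :: 'k poly poly) \<in> AA" unfolding e2 by (rule monoXYZ_in)
    have dx: "D (xm ^ X) = D' (xm ^ X)" by (rule agree_pow[OF assms(1,2,3) xpow_in])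
    have dy: "D (ym ^ Y) = D' (ym ^ Y)" by (rule agree_pow[OF assms(1,2,4) ypow_in])
    have dz: "D (zm ^ Z) = D' (zm ^ Z)" by (rule agree_pow[OF assms(1,2,5) zpow_in])
    have xi: "(xm ^ X :: 'k poly poly) \<in> AA" and yi: "(ym ^ Y :: 'k poly poly) \<in> AA"
      and zi: "(zm ^ Z :: 'k poly poly) \<in> AA" by (rule xpow_in, rule ypow_in, rule zpow_in)
    have "D (xm ^ X * ym ^ Y) = xm ^ X * D (ym ^ Y) + ym ^ Y * D (xm ^ X)"
      using assms(1) xi yi unfolding leib_def by blast
    moreover have "D' (xm ^ X * ym ^ Y) = xm ^ X * D' (ym ^ Y) + ym ^ Y * D' (xm ^ X)"
      using assms(2) xi yi unfolding leib_def by blast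
    ultimately have dxy: "D (xm ^ X * ym ^ Y) = D' (xm ^ X * ym ^ Y)" using dx dy by simp
    have "D (xm ^ X * ym ^ Y * zm ^ Z) = xm ^ X * ym ^ Y * D (zm ^ Z) + zm ^ Z * D (xm ^ X * ym ^ Y)"
      using assms(1) inXY zi unfolding leib_def by blast
    moreover have "D' (xm ^ X * ym ^ Y * zm ^ Z) = xm ^ X * ym ^ Y * D' (zm ^ Z) + zm ^ Z * D' (xm ^ X * ym ^ Y)"
      using assms(2) inXY zi unfolding leib_def by blast
    ultimately show ?thesis unfolding e using dxy dz by simp
  qed
  let ?M = "{p. p \<in> AA \<and> D p = D' p}"
  have "p \<in> ?M"
  proof (rule supp_closure[where C = "\<lambda>i j. S (int i) (int j)"])
    have z: "(0 :: 'k poly poly) \<in> AA" by (rule zero_in)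
    show "0 \<in> ?M" using z leib_zero[OF assms(1) z] leib_zero[OF assms(2) z] by simp
  next
    fix u v assume "u \<in> ?M" "v \<in> ?M"
    then show "u + v \<in> ?M" using add_in assms(1,2) unfolding leib_def by auto
  next
    fix i j and c :: 'k assume "c \<noteq> 0" and ij: "S (int i) (int j)"
    have m: "(tu_monom i j :: 'k poly poly) \<in> AA" by (rule monom_in[OF ij])
    have e: "(monom (monom c i) j :: 'k poly poly) = smult [:c:] (tu_monom i j)" by (rule monom_smult)
    have "D (smult [:c:] (tu_monom i j)) = smult [:c:] (D (tu_monom i j))"
      using assms(1) m unfolding leib_def by blast
    moreover have "D' (smult [:c:] (tu_monom i j)) = smult [:c:] (D' (tu_monom i j))"
      using assms(2) m unfolding leib_def by blast
    ultimately show "monom (monom c i) j \<in> ?M" unfolding e using mono[OF ij] smult_in[OF m] by simp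
  next
    fix i j assume "coeff (coeff p j) i \<noteq> 0"
    then have "ec p (int i) (int j) \<noteq> 0" by (simp add: ec_def)
    then show "S (int i) (int j)" using assms(6) memA by blast
  qed
  then show ?thesis by blast
qed

end

lemma dt_monom: "map_poly pderiv (tu_monom i j) = (of_nat i * tu_monom (i - 1) j :: 'k::field_char_0 poly poly)"
proof (rule ec_eqI)
  fix I J
  show "ec (map_poly pderiv (tu_monom i j)) I J = ec (of_nat i * tu_monom (i - 1) j :: 'k poly poly) I J"
    by (cases "i = 0"; cases "I = -1") (auto simp: ec_dt ec_of_nat_mult ec_tu_monom of_nat_diff)
qed

lemma du_monom: "pderiv (tu_monom i j) = (of_nat j * tu_monom i (j - 1) :: 'k::field_char_0 poly poly)"
proof (rule ec_eqI)
  fix I J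
  show "ec (pderiv (tu_monom i j)) I J = ec (of_nat j * tu_monom i (j - 1) :: 'k poly poly) I J"
    by (cases "j = 0"; cases "J = -1") (auto simp: ec_du ec_of_nat_mult ec_tu_monom of_nat_diff)
qed

lemma of_nat_smult: "(of_nat n * p :: 'k::comm_ring_1 poly poly) = smult [:of_nat n:] p"
  by (simp add: of_nat_poly)

lemma tu_monom_nz: "(tu_monom a b :: 'k::field poly poly) \<noteq> 0"
  by (simp add: tu_monom_def)

lemma tu_monom_inj: "(tu_monom a b :: 'k::field poly poly) = tu_monom c d \<Longrightarrow> a = c \<and> b = d"
  by (metis ec_tu_monom one_neq_zero of_nat_eq_iff)

lemma of_nat_pp_nz: "n \<noteq> 0 \<Longrightarrow> (of_nat n :: 'k::field_char_0 poly poly) \<noteq> 0"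
  by (metis ec_of_nat_mult ec_0 mult_1_right mult_zero_right ec_tu_monom tu_monom_0 of_nat_eq_0_iff)

context sgset
begin

lemma dT_z: "dT a b zm = (of_nat n1 * tu_monom (a + n1 - 1) b :: 'k::field_char_0 poly poly)"
  using n01 by (simp add: dT_def dt_monom tu_monom_mult algebra_simps)

lemma dT_x: "dT a b xm = (0 :: 'k::field_char_0 poly poly)"
  by (simp add: dT_def dt_monom)

lemma dU_z: "dU a b zm = (0 :: 'k::field_char_0 poly poly)"
  by (simp add: dU_def du_monom)

lemma dU_x: "dU a b xm = (of_nat n1 * tu_monom a (b + n1 - 1) :: 'k::field_char_0 poly poly)"
  using n01 by (simp add: dU_def du_monom tu_monom_mult algebra_simps)

lemma a2_n1: "a2 + n1 - 1 = a3"
  using a2_int a3_int n01 by simp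

lemma b3_n1: "b3 + n1 - 1 = b2"
  using b3_int b2_int n01 by simp

lemma rel_ec:
  fixes D :: "'k::field_char_0 poly poly \<Rightarrow> 'k poly poly"
  assumes "leib AA D"
  shows "of_nat n1 * ec (D ym) (m1 + int n0) (m2 + (int n1 - int n0)) =
         of_nat n0 * ec (D zm) (m1 + int n1) m2 + of_nat (n1 - n0) * ec (D xm) m1 (m2 + int n1)"
proof -
  have r: "of_nat n1 * (tu_monom ((n1 - 1) * n0) ((n1 - 1) * (n1 - n0)) * D ym) =
        of_nat n0 * (tu_monom ((n0 - 1) * n1) ((n1 - n0) * n1) * D zm) +
        of_nat (n1 - n0) * (tu_monom (n0 * n1) ((n1 - n0 - 1) * n1) * D xm)"
    using relation[OF assms] by (simp add: tu_monom_power tu_monom_mult ac_simps)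
  have "ec (of_nat n1 * (tu_monom ((n1 - 1) * n0) ((n1 - 1) * (n1 - n0)) * D ym))
          (m1 + int n1 * int n0) (m2 + int n1 * (int n1 - int n0)) =
        ec (of_nat n0 * (tu_monom ((n0 - 1) * n1) ((n1 - n0) * n1) * D zm) +
        of_nat (n1 - n0) * (tu_monom (n0 * n1) ((n1 - n0 - 1) * n1) * D xm))
          (m1 + int n1 * int n0) (m2 + int n1 * (int n1 - int n0))"
    by (simp only: r)
  moreover have F: "int ((n1 - 1) * n0) = int n1 * int n0 - int n0"
    "int ((n1 - 1) * (n1 - n0)) = int n1 * (int n1 - int n0) - (int n1 - int n0)"
    "int ((n0 - 1) * n1) = int n1 * int n0 - int n1"
    "int ((n1 - n0) * n1) = int n1 * (int n1 - int n0)"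
    "int ((n1 - n0 - 1) * n1) = int n1 * (int n1 - int n0) - int n1"
  proof -
    have f: "int (n1 - 1) = int n1 - 1" "int (n1 - n0) = int n1 - int n0" "int (n0 - 1) = int n0 - 1"
      "int (n1 - n0 - 1) = int n1 - int n0 - 1" using n01 n0pos by auto
    show "int ((n1 - 1) * n0) = int n1 * int n0 - int n0"
      "int ((n1 - 1) * (n1 - n0)) = int n1 * (int n1 - int n0) - (int n1 - int n0)"
      "int ((n0 - 1) * n1) = int n1 * int n0 - int n1"
      "int ((n1 - n0) * n1) = int n1 * (int n1 - int n0)"
      "int ((n1 - n0 - 1) * n1) = int n1 * (int n1 - int n0) - int n1"
      by (simp_all only: of_nat_mult f) (simp_all add: algebra_simps)
  qed
  moreover have P: "m1 + int n1 * int n0 - int ((n1 - 1) * n0) = m1 + int n0"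
    "m2 + int n1 * (int n1 - int n0) - int ((n1 - 1) * (n1 - n0)) = m2 + (int n1 - int n0)"
    "m1 + int n1 * int n0 - int ((n0 - 1) * n1) = m1 + int n1"
    "m2 + int n1 * (int n1 - int n0) - int ((n1 - n0) * n1) = m2"
    "m1 + int n1 * int n0 - int (n0 * n1) = m1"
    "m2 + int n1 * (int n1 - int n0) - int ((n1 - n0 - 1) * n1) = m2 + int n1"
    by (simp_all only: F) (simp_all add: algebra_simps)
  ultimately show ?thesis
    by (simp only: ec_of_nat_mult ec_monom_mult ec_add P)
qed

end

lemma dT_t: "dT a b (tu_monom 1 0) = (tu_monom a b :: 'k::field_char_0 poly poly)"
  by (simp add: dT_def dt_monom tu_monom_0)
lemma dU_t: "dU a b (tu_monom 1 0) = (0 :: 'k::field_char_0 poly poly)"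
  by (simp add: dU_def du_monom)
lemma dT_u: "dT a b (tu_monom 0 1) = (0 :: 'k::field_char_0 poly poly)"
  by (simp add: dT_def dt_monom)
lemma dU_u: "dU a b (tu_monom 0 1) = (tu_monom a b :: 'k::field_char_0 poly poly)"
  by (simp add: dU_def du_monom tu_monom_0)

lemma dT_inj: "(dT a b :: 'k::field_char_0 poly poly \<Rightarrow> _) = dT c d \<Longrightarrow> a = c \<and> b = d"
  by (metis dT_t tu_monom_inj)
lemma dU_inj: "(dU a b :: 'k::field_char_0 poly poly \<Rightarrow> _) = dU c d \<Longrightarrow> a = c \<and> b = d"
  by (metis dU_u tu_monom_inj)
lemma dT_dU: "(dT a b :: 'k::field_char_0 poly poly \<Rightarrow> _) \<noteq> dU c d"
  by (metis dT_t dU_t tu_monom_nz)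

lemma smult_inv_cancel:
  assumes "n \<noteq> 0"
  shows "smult [:1 / of_nat n:] p * (of_nat n * X) = X * (p :: 'k::field_char_0 poly poly)"
proof -
  have "smult [:1 / of_nat n:] p * (of_nat n * X) = smult ([:1 / of_nat n:] * [:of_nat n:]) (p * X)"
    by (simp add: of_nat_smult mult_smult_left mult_smult_right smult_smult)
  also have "[:1 / of_nat n:] * [:of_nat n:] = (1 :: 'k poly)" using assms by (simp add: one_pCons)
  finally show ?thesis by (simp add: mult.commute)
qed

context sgset
begin

lemma n1_ge2: "2 \<le> n1" using n0pos n01 by simp

lemma b2_pos: "0 < b2" unfolding b2_def using n01 n1_ge2 by simp
lemma a3_pos: "0 < a3" unfolding a3_def using n0pos n1_ge2 by simp

lemma suppP:
  fixes D :: "'k::field_char_0 poly poly \<Rightarrow> 'k poly poly"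
  assumes "is_derivation AA D" "ec (D zm) i j \<noteq> 0"
  shows "S (i - int n1) (j - int 0) \<or> S (i - int a3) (j - int b2)"
proof (rule ccontr)
  assume nn: "\<not> ?thesis"
  have inA: "D zm \<in> AA" "D xm \<in> AA" "D ym \<in> AA"
    using assms(1) monom_in[of n1 0] monom_in[of 0 n1] monom_in[of n0 "n1 - n0"]
      S_z[of 1] S_x[of 1] S_y[of 1] n01 unfolding is_derivation_def by (auto simp: of_nat_diff)
  have Sij: "S i j" using inA(1) assms(2) memA by blast
  have "\<not> S (i - int n1 + int n0) (j + (int n1 - int n0)) \<and> \<not> S (i - int n1) (j + int n1)"
    by (rule F3[OF Sij]) (use nn in \<open>simp_all add: a3_int b2_int\<close>)
  then have z1: "ec (D ym) (i - int n1 + int n0) (j + (int n1 - int n0)) = 0"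
    and z2: "ec (D xm) (i - int n1) (j + int n1) = 0"
    using inA memA by blast+
  have "of_nat n1 * ec (D ym) (i - int n1 + int n0) (j + (int n1 - int n0)) =
         of_nat n0 * ec (D zm) (i - int n1 + int n1) j + of_nat (n1 - n0) * ec (D xm) (i - int n1) (j + int n1)"
    by (rule rel_ec[OF leib_of_der[OF assms(1)]])
  then have "of_nat n0 * ec (D zm) i j = 0" using z1 z2 by simp
  then show False using assms(2) n0pos by simp
qed

lemma suppQ:
  fixes D :: "'k::field_char_0 poly poly \<Rightarrow> 'k poly poly"
  assumes "is_derivation AA D" "ec (D xm) i j \<noteq> 0"
  shows "S (i - int 0) (j - int n1) \<or> S (i - int a3) (j - int b2)"
proof (rule ccontr)
  assume nn: "\<not> ?thesis"
  have inA: "D zm \<in> AA" "D xm \<in> AA" "D ym \<in> AA"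
    using assms(1) monom_in[of n1 0] monom_in[of 0 n1] monom_in[of n0 "n1 - n0"]
      S_z[of 1] S_x[of 1] S_y[of 1] n01 unfolding is_derivation_def by (auto simp: of_nat_diff)
  have Sij: "S i j" using inA(2) assms(2) memA by blast
  have "\<not> S (i + int n0) (j - int n1 + (int n1 - int n0)) \<and> \<not> S (i + int n1) (j - int n1)"
    by (rule F4[OF Sij]) (use nn in \<open>simp_all add: a3_int b2_int\<close>)
  then have z1: "ec (D ym) (i + int n0) (j - int n1 + (int n1 - int n0)) = 0"
    and z2: "ec (D zm) (i + int n1) (j - int n1) = 0"
    using inA memA by blast+
  have "of_nat n1 * ec (D ym) (i + int n0) (j - int n1 + (int n1 - int n0)) =
         of_nat n0 * ec (D zm) (i + int n1) (j - int n1) + of_nat (n1 - n0) * ec (D xm) i (j - int n1 + int n1)"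
    by (rule rel_ec[OF leib_of_der[OF assms(1)]])
  then have "of_nat (n1 - n0) * ec (D xm) i j = 0" using z1 z2 by simp
  then show False using assms(2) n01 by simp
qed

end

context sgset
begin

lemma ec_cc: "ec (cc * (of_nat n * tu_monom a b)) i j = of_nat n * ec (cc :: 'k::field_char_0 poly poly) (i - int a) (j - int b)"
proof -
  have e: "cc * (of_nat n * tu_monom a b) = of_nat n * (tu_monom a b * cc)" by (simp add: ac_simps)
  have "ec (cc * (of_nat n * tu_monom a b)) i j = ec (of_nat n * (tu_monom a b * cc)) i j" by (simp only: e)
  also have "\<dots> = of_nat n * ec cc (i - int a) (j - int b)" by (simp only: ec_of_nat_mult ec_monom_mult)
  finally show ?thesis .
qed

lemma sum4: "a \<noteq> b \<Longrightarrow> a \<noteq> c \<Longrightarrow> a \<noteq> d \<Longrightarrow> b \<noteq> c \<Longrightarrow> b \<noteq> d \<Longrightarrow> c \<noteq> d \<Longrightarrow>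
  sum f {a, b, c, d} = f a + f b + f c + f d"
  by (simp add: algebra_simps)

abbreviation "GG \<equiv> {dT 1 0, dT a2 b2, dU 0 1, dU a3 b3}"

lemma distinct_gens:
  "(dT 1 0 :: 'k::field_char_0 poly poly \<Rightarrow> _) \<noteq> dT a2 b2"
  "(dU 0 1 :: 'k::field_char_0 poly poly \<Rightarrow> _) \<noteq> dU a3 b3"
  using dT_inj[of 1 0 a2 b2] dU_inj[of 0 1 a3 b3] b2_pos a3_pos by auto

lemma ne6:
  "(dT 1 0 :: 'k::field_char_0 poly poly \<Rightarrow> _) \<noteq> dT a2 b2"
  "(dT 1 0 :: 'k::field_char_0 poly poly \<Rightarrow> _) \<noteq> dU 0 1"
  "(dT 1 0 :: 'k::field_char_0 poly poly \<Rightarrow> _) \<noteq> dU a3 b3"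
  "(dT a2 b2 :: 'k::field_char_0 poly poly \<Rightarrow> _) \<noteq> dU 0 1"
  "(dT a2 b2 :: 'k::field_char_0 poly poly \<Rightarrow> _) \<noteq> dU a3 b3"
  "(dU 0 1 :: 'k::field_char_0 poly poly \<Rightarrow> _) \<noteq> dU a3 b3"
  using distinct_gens dT_dU by auto

lemma gens_der: "g \<in> GG \<Longrightarrow> is_derivation (AA :: 'k::field_char_0 poly poly set) g"
  using der1 der2 der3 der4 by auto

lemma generation:
  fixes D :: "'k::field_char_0 poly poly \<Rightarrow> 'k poly poly"
  assumes D: "is_derivation AA D"
  shows "in_span AA GG D"
proof -
  have n1: "n1 \<noteq> 0" using n01 by simp
  obtain p1 p2 where p: "p1 \<in> AA" "p2 \<in> AA" "D zm = tu_monom n1 0 * p1 + tu_monom a3 b2 * p2"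
    using split_lemma[of "D zm" n1 0 a3 b2] suppP[OF D] by blast
  obtain q1 q2 where q: "q1 \<in> AA" "q2 \<in> AA" "D xm = tu_monom 0 n1 * q1 + tu_monom a3 b2 * q2"
    using split_lemma[of "D xm" 0 n1 a3 b2] suppQ[OF D] by blast
  define k :: 'k where "k = 1 / of_nat n1"
  define c1 where "c1 = smult [:k:] p1"
  define c2 where "c2 = smult [:k:] p2"
  define c3 where "c3 = smult [:k:] q1"
  define c4 where "c4 = smult [:k:] q2"
  have cin: "c1 \<in> AA" "c2 \<in> AA" "c3 \<in> AA" "c4 \<in> AA"
    unfolding c1_def c2_def c3_def c4_def using p q smult_in by auto
  define c where "c = (\<lambda>g :: 'k poly poly \<Rightarrow> 'k poly poly. if g = dT 1 0 then c1 else if g = dT a2 b2 then c2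
                          else if g = dU 0 1 then c3 else c4)"
  define D' where "D' = (\<lambda>p :: 'k poly poly. \<Sum>g\<in>GG. c g * g p)"
  have D'eq: "D' p = c1 * dT 1 0 p + c2 * dT a2 b2 p + c3 * dU 0 1 p + c4 * dU a3 b3 p" for p
  proof -
    have cc: "c (dT 1 0) = c1" "c (dT a2 b2) = c2" "c (dU 0 1) = c3" "c (dU a3 b3) = c4"
      unfolding c_def using ne6 ne6[symmetric] by auto
    have "D' p = c (dT 1 0) * dT 1 0 p + c (dT a2 b2) * dT a2 b2 p + c (dU 0 1) * dU 0 1 p + c (dU a3 b3) * dU a3 b3 p"
      unfolding D'_def by (rule sum4) (rule ne6)+
    then show ?thesis unfolding cc .
  qed
  have leibD': "leib AA D'" unfolding D'_def
    by (rule leib_comb) (use gens_der leib_of_der in blast)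
  have leibD: "leib AA D" by (rule leib_of_der[OF D])
  have n1e: "1 + n1 - 1 = n1" "0 + n1 - 1 + 1 = n1" using n01 by auto
  have "D' zm = c1 * (of_nat n1 * zm) + c2 * (of_nat n1 * tu_monom a3 b2)"
    unfolding D'eq by (simp only: dT_z dU_z a2_n1 n1e mult_zero_right add_0_right)
  also have "\<dots> = zm * p1 + tu_monom a3 b2 * p2"
    unfolding c1_def c2_def k_def by (simp only: smult_inv_cancel[OF n1])
  finally have ez: "D' zm = D zm" using p(3) by (simp add: mult.commute)
  have "D' xm = c3 * (of_nat n1 * tu_monom 0 (1 + n1 - 1)) + c4 * (of_nat n1 * tu_monom a3 b2)"
    unfolding D'eq by (simp only: dT_x dU_x b3_n1 mult_zero_right add_0_left add_0_right)
  also have "\<dots> = xm * q1 + tu_monom a3 b2 * q2"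
    unfolding c3_def c4_def k_def n1e by (simp only: smult_inv_cancel[OF n1])
  finally have ex: "D' xm = D xm" using q(3) by (simp add: mult.commute)
  have eqy: "of_nat n1 * ym ^ (n1 - 1) * D ym = of_nat n1 * ym ^ (n1 - 1) * D' ym"
    using relation[OF leibD] relation[OF leibD'] ez ex by simp
  have nz: "(of_nat n1 * ym ^ (n1 - 1) :: 'k poly poly) \<noteq> 0"
    using of_nat_pp_nz[OF n1] tu_monom_nz by (simp add: tu_monom_power)
  have ey: "D' ym = D ym" using eqy mult_left_cancel[OF nz] by metis
  have "\<forall>p\<in>AA. D p = D' p"
    using agree[OF leibD leibD'] ez ex ey by simp
  moreover have "\<forall>g\<in>GG. c g \<in> AA" unfolding c_def using cin by auto
  ultimately show ?thesis unfolding in_span_def D'_def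
    by (intro exI[of _ GG] exI[of _ c]) auto
qed

lemma evals:
  fixes cc :: "'k::field_char_0 poly poly"
  shows "ec (cc * dT 1 0 zm) w1 w2 = of_nat n1 * ec cc (w1 - int n1) w2"
    "ec (cc * dT a2 b2 zm) w1 w2 = of_nat n1 * ec cc (w1 - int a3) (w2 - int b2)"
    "ec (cc * dU a b zm) w1 w2 = 0"
    "ec (cc * dU 0 1 xm) w1 w2 = of_nat n1 * ec cc w1 (w2 - int n1)"
    "ec (cc * dU a3 b3 xm) w1 w2 = of_nat n1 * ec cc (w1 - int a3) (w2 - int b2)"
    "ec (cc * dT a b xm) w1 w2 = 0"
proof -
  have n1e: "1 + n1 - 1 = n1" "0 + n1 - 1 + 1 = n1" using n01 by auto
  show "ec (cc * dT 1 0 zm) w1 w2 = of_nat n1 * ec cc (w1 - int n1) w2"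
    by (simp only: dT_z n1e ec_cc) simp
  show "ec (cc * dT a2 b2 zm) w1 w2 = of_nat n1 * ec cc (w1 - int a3) (w2 - int b2)"
    by (simp only: dT_z a2_n1 ec_cc)
  show "ec (cc * dU a b zm) w1 w2 = 0" by (simp add: dU_z)
  show "ec (cc * dU 0 1 xm) w1 w2 = of_nat n1 * ec cc w1 (w2 - int n1)"
    by (simp only: dU_x ec_cc) (simp add: n1e)
  show "ec (cc * dU a3 b3 xm) w1 w2 = of_nat n1 * ec cc (w1 - int a3) (w2 - int b2)"
    by (simp only: dU_x b3_n1 ec_cc)
  show "ec (cc * dT a b xm) w1 w2 = 0" by (simp add: dT_x)
qed

lemma not_in_span_aux:
  fixes g :: "'k::field_char_0 poly poly \<Rightarrow> 'k poly poly"
  assumes "p0 \<in> AA" "ec (g p0) w1 w2 \<noteq> 0"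
    "\<And>h cc. h \<in> GG - {g} \<Longrightarrow> cc \<in> AA \<Longrightarrow> ec (cc * h p0) w1 w2 = 0"
    "F \<subseteq> GG - {g}" "\<forall>h\<in>F. c h \<in> AA" "\<forall>p\<in>AA. g p = (\<Sum>h\<in>F. c h * h p)"
  shows False
proof -
  have "ec (g p0) w1 w2 = (\<Sum>h\<in>F. ec (c h * h p0) w1 w2)"
    using assms(1,6) by (simp add: ec_sum)
  also have "\<dots> = 0" using assms(3,4,5) by (intro sum.neutral) blast
  finally show False using assms(2) by simp
qed

lemma minimal:
  fixes H :: "('k::field_char_0 poly poly \<Rightarrow> 'k poly poly) set"
  assumes "H \<subset> GG"
  shows "\<not> generates_Der AA H"
proof
  assume gen: "generates_Der AA H"
  obtain g where g: "g \<in> GG" "g \<notin> H" using assms by blast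
  then have "in_span AA H g" using gen gens_der unfolding generates_Der_def by blast
  then obtain F c where F: "finite F" "F \<subseteq> H" "\<forall>h\<in>F. c h \<in> AA" "\<forall>p\<in>AA. g p = (\<Sum>h\<in>F. c h * h p)"
    unfolding in_span_def by blast
  have FG: "F \<subseteq> GG - {g}" using F(2) g assms by blast
  have n1: "(of_nat n1 :: 'k) \<noteq> 0" using n01 by simp
  have zin: "(zm :: 'k poly poly) \<in> AA" using monom_in[of n1 0] S_z[of 1] by simp
  have xin: "(xm :: 'k poly poly) \<in> AA" using monom_in[of 0 n1] S_x[of 1] by simp
  have n1e: "1 + n1 - 1 = n1" using n01 by simp
  have b2e: "int b2 > 0" using b2_pos by simp
  have a3e: "int a3 > 0" using a3_pos by simp
  have Fa: "\<not> S (int a3 - int n1) (int b2)" using F5a by (simp add: a3_int b2_int)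
  have Fb: "\<not> S (int a3) (int b2 - int n1)" using F5b by (simp add: a3_int b2_int)
  from g(1) consider "g = dT 1 0" | "g = dT a2 b2" | "g = dU 0 1" | "g = dU a3 b3" by blast
  then show False
  proof cases
    case 1
    then have "g = dT 1 0" .
    show False
    proof (rule not_in_span_aux[OF zin _ _ FG F(3,4), of "int n1" 0])
      show "ec (g zm) (int n1) 0 \<noteq> 0"
        using n1 \<open>g = dT 1 0\<close> by (simp add: dT_z n1e n1e[simplified] ec_of_nat_mult ec_tu_monom)
      fix h :: "'k poly poly \<Rightarrow> 'k poly poly" and cc :: "'k poly poly" assume "h \<in> GG - {g}" "cc \<in> AA"
      then have "h = dT a2 b2 \<or> h = dU 0 1 \<or> h = dU a3 b3" using \<open>g = dT 1 0\<close> by auto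
      then show "ec (cc * h zm) (int n1) 0 = 0"
        using b2e by (elim disjE) (simp_all add: evals evals[simplified] ec_neg)
    qed
  next
    case 2
    then have "g = dT a2 b2" .
    show False
    proof (rule not_in_span_aux[OF zin _ _ FG F(3,4), of "int a3" "int b2"])
      show "ec (g zm) (int a3) (int b2) \<noteq> 0"
        using n1 \<open>g = dT a2 b2\<close> by (simp add: dT_z a2_n1 a2_n1[simplified] ec_of_nat_mult ec_tu_monom)
      fix h :: "'k poly poly \<Rightarrow> 'k poly poly" and cc :: "'k poly poly" assume "h \<in> GG - {g}" "cc \<in> AA"
      moreover have "h = dT 1 0 \<or> h = dU 0 1 \<or> h = dU a3 b3" using \<open>g = dT a2 b2\<close> \<open>h \<in> GG - {g}\<close> by auto
      moreover have "ec cc (int a3 - int n1) (int b2) = 0" using \<open>cc \<in> AA\<close> Fa memA by blast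
      ultimately show "ec (cc * h zm) (int a3) (int b2) = 0"
        by (elim disjE) (simp_all add: evals evals[simplified])
    qed
  next
      case 3
      then have "g = dU 0 1" .
      show False
      proof (rule not_in_span_aux[OF xin _ _ FG F(3,4), of 0 "int n1"])
        show "ec (g xm) 0 (int n1) \<noteq> 0"
          using n1 \<open>g = dU 0 1\<close> by (simp add: dU_x n1e n1e[simplified] ec_of_nat_mult ec_tu_monom)
        fix h :: "'k poly poly \<Rightarrow> 'k poly poly" and cc :: "'k poly poly" assume "h \<in> GG - {g}" "cc \<in> AA"
        then have "h = dT 1 0 \<or> h = dT a2 b2 \<or> h = dU a3 b3" using \<open>g = dU 0 1\<close> by auto
        then show "ec (cc * h xm) 0 (int n1) = 0"
          using a3e by (elim disjE) (simp_all add: evals evals[simplified] ec_neg)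
      qed
    next
      case 4
      then have "g = dU a3 b3" .
      show False
      proof (rule not_in_span_aux[OF xin _ _ FG F(3,4), of "int a3" "int b2"])
        show "ec (g xm) (int a3) (int b2) \<noteq> 0"
          using n1 \<open>g = dU a3 b3\<close> by (simp add: dU_x b3_n1 b3_n1[simplified] ec_of_nat_mult ec_tu_monom)
        fix h :: "'k poly poly \<Rightarrow> 'k poly poly" and cc :: "'k poly poly" assume "h \<in> GG - {g}" "cc \<in> AA"
        moreover have "h = dT 1 0 \<or> h = dT a2 b2 \<or> h = dU 0 1" using \<open>g = dU a3 b3\<close> \<open>h \<in> GG - {g}\<close> by auto
        moreover have "ec cc (int a3) (int b2 - int n1) = 0" using \<open>cc \<in> AA\<close> Fb memA by blast
        ultimately show "ec (cc * h xm) (int a3) (int b2) = 0"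
          by (elim disjE) (simp_all add: evals evals[simplified])
      qed
  qed
qed

theorem main: "minimally_generates_Der (AA :: 'k::field_char_0 poly poly set) GG"
  unfolding minimally_generates_Der_def generates_Der_def
  using gens_der generation minimal unfolding generates_Der_def by blast

end

lemma gen2_univ: assumes "gen2 a b = UNIV" "1 < b" shows "a = 1"
proof -
  have "(1::nat) \<in> gen2 a b" using assms(1) by simp
  then obtain x y where h: "1 = x * a + y * b" unfolding gen2_def by blast
  have "y = 0"
  proof (rule ccontr)
    assume "y \<noteq> 0"
    then have "b \<le> y * b" by simp
    then show False using h assms(2) by linarith
  qed
  then show ?thesis using h by simp
qed

theorem proposition3p1:
  fixes n0 n1 :: nat
  assumes "0 < n0" and "n0 < n1" and "coprime n0 n1"
  defines "A \<equiv> (semigroup_ring (semigroupS n0 n1) :: 'k::field_char_0 poly poly set)"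
  shows
   "(gen2 n0 n1 \<noteq> UNIV \<and> gen2 (n1 - n0) n1 \<noteq> UNIV \<longrightarrow>
       minimally_generates_Der A
         {dT 1 0, dT (n0 * (n1 - 1) + 1 - n1) ((n1 - 1) * (n1 - n0)),
          dU 0 1, dU (n0 * (n1 - 1)) ((n1 - 1) * (n1 - n0) + 1 - n1)}) \<and>
    (gen2 n0 n1 = UNIV \<and> gen2 (n1 - n0) n1 \<noteq> UNIV \<longrightarrow>
       minimally_generates_Der A
         {dT 1 0, dT 0 (1 + (n1 - 2) * n1),
          dU 0 1, dU (n1 - 1) ((n1 - 1) * (n1 - 2))}) \<and>
    (gen2 n0 n1 \<noteq> UNIV \<and> gen2 (n1 - n0) n1 = UNIV \<longrightarrow>
       minimally_generates_Der A
         {dT 1 0, dT (n0 * (n1 - 1) + 1 - n1) (n1 - 1),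
          dU 0 1, dU (n0 * (n1 - 1)) 0}) \<and>
    (gen2 n0 n1 = UNIV \<and> gen2 (n1 - n0) n1 = UNIV \<longrightarrow>
       minimally_generates_Der A
         {dT 1 0, dT 0 1, dU 0 1, dU 1 0})"
proof -
  interpret sgset n0 n1 using assms(1-3) by unfold_locales
  have M: "minimally_generates_Der A {dT 1 0, dT a2 b2, dU 0 1, dU a3 b3}"
    unfolding A_def by (rule main)
  have g1: "n0 = 1" if "gen2 n0 n1 = UNIV" using gen2_univ[OF that] assms(2) n1_ge2 by simp
  have g2: "n1 - n0 = 1" if "gen2 (n1 - n0) n1 = UNIV" using gen2_univ[OF that] n1_ge2 by simp
  have c1: "minimally_generates_Der A
         {dT 1 0, dT (n0 * (n1 - 1) + 1 - n1) ((n1 - 1) * (n1 - n0)),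
          dU 0 1, dU (n0 * (n1 - 1)) ((n1 - 1) * (n1 - n0) + 1 - n1)}"
    using M unfolding a2_def b2_def a3_def b3_def .
  have c2: "minimally_generates_Der A
         {dT 1 0, dT 0 (1 + (n1 - 2) * n1),
          dU 0 1, dU (n1 - 1) ((n1 - 1) * (n1 - 2))}" if "n0 = 1"
  proof -
    obtain m where m: "n1 = m + 2" using n1_ge2 by (metis add.commute le_Suc_ex)
    have "a2 = 0" "b2 = 1 + (n1 - 2) * n1" "a3 = n1 - 1" "b3 = (n1 - 1) * (n1 - 2)"
      unfolding a2_def b2_def a3_def b3_def using that m by (simp_all add: algebra_simps)
    then show ?thesis using M by simp
  qed
  have c3: "minimally_generates_Der A
         {dT 1 0, dT (n0 * (n1 - 1) + 1 - n1) (n1 - 1),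
          dU 0 1, dU (n0 * (n1 - 1)) 0}" if "n1 - n0 = 1"
  proof -
    have "b2 = n1 - 1" "b3 = 0"
      unfolding b2_def b3_def using that n1_ge2 by simp_all
    then show ?thesis using M unfolding a2_def a3_def by simp
  qed
  have c4: "minimally_generates_Der A {dT 1 0, dT 0 1, dU 0 1, dU 1 0}" if "n0 = 1" "n1 - n0 = 1"
  proof -
    have "n1 = 2" using that by simp
    then have "a2 = 0" "b2 = 1" "a3 = 1" "b3 = 0"
      unfolding a2_def b2_def a3_def b3_def using that by simp_all
    then show ?thesis using M by simp
  qed
  show ?thesis using c1 c2 c3 c4 g1 g2 by blast
qed

end
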